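(* Let $n,m\in\mathbb{N}$, $f:\mathbb{F}_2^n\to\mathbb{F}_2$, $S\subseteq\mathbb{F}_2^n$, and let $g:\mathbb{F}_2^n\to\mathbb{F}_2$ be the indicator of $S$ ($g(\mathbf{x})=1$ iff $\mathbf{x}\in S$). Then, when the two-query algorithm $A^{(m)2,3}_n(g,f,f)$ is executed, the probability that the driving qubit is measured as $\ket{1}$ equals $p:=2^{-n}\sum_{\mathbf{x}\in S}|\mathcal{H}^{(m)}_f(\mathbf{x})|^2$.
   Context: $\zeta_m=e^{2\pi i/m}$; $wt$ is Hamming weight; $\mathbf{x}\cdot\mathbf{y}=\bigoplus_i x_iy_i$. The $m$-Hadamard transform is $\mathcal{H}^{(m)}_f(\boldsymbol{\omega})=2^{-n/2}\sum_{\mathbf{x}}(-1)^{f(\mathbf{x})\oplus\mathbf{x}\cdot\boldsymbol{\omega}}\zeta_m^{wt(\mathbf{x})}$. Quantum gates: $\mathrm{H}$ is the Hadamard gate; $\Omega_m=\frac{1}{\sqrt2}\begin{pmatrix}1&\zeta_m\\1&-\zeta_m\end{pmatrix}$; $\mathrm{S}_m=\mathrm{diag}(1,\zeta_m)$; for a Boolean function $f$, $U_f$ denotes the phase oracle $\ket{\mathbf{x}}\mapsto(-1)^{f(\mathbf{x})}\ket{\mathbf{x}}$ on $n$ qubits (realized via an ancilla in state $\ket{-}$). Algorithm $A^{(m)2,3}_n(f_1,f_2,f_3)$: start with a driving qubit in $\ket{+}$ and an $n$-qubit register in $\ket{0^n}$; apply $\mathrm{H}^{\otimes n}$ to the register;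 then, controlled on the driving qubit being $\ket{0}$, apply to the register in order $U_{f_2}$, $\Omega_m^{\otimes n}$, $U_{f_1}$, $\mathrm{H}^{\otimes n}$; controlled on the driving qubit being $\ket{1}$, apply in order $\mathrm{S}_m^{\otimes n}$, $U_{f_3}$; finally apply $\mathrm{H}$ to the driving qubit and measure it in the computational basis. *)

theory Defs
  imports "HOL-Analysis.Analysis"
begin

text \<open>Bit strings in F_2^n are boolean lists of length n; F_2 values are booleans
  (True = 1), addition in F_2 is inequality (xor).\<close>

definition bitstrings :: "nat \<Rightarrow> bool list set" where
  "bitstrings n = {xs. length xs = n}"

definition zeta :: "nat \<Rightarrow> complex" where
  "zeta m = exp (2 * of_real pi * \<i> / of_nat m)"

definition wt :: "bool list \<Rightarrow> nat" where
  "wt x = length (filter id x)"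

definition dotp :: "bool list \<Rightarrow> bool list \<Rightarrow> bool" where
  "dotp x y = odd (card {i. i < length x \<and> i < length y \<and> x ! i \<and> y ! i})"

definition sgnb :: "bool \<Rightarrow> complex" where
  "sgnb b = (if b then -1 else 1)"

definition mHadamard :: "nat \<Rightarrow> nat \<Rightarrow> (bool list \<Rightarrow> bool) \<Rightarrow> bool list \<Rightarrow> complex" where
  "mHadamard n m f w =
     (1 / of_real (sqrt (2 ^ n))) * (\<Sum>x\<in>bitstrings n. sgnb (f x \<noteq> dotp x w) * zeta m ^ wt x)"

text \<open>Single-qubit gates as matrices indexed by (row, column) in bool (False = 0, True = 1).\<close>
type_synonym gate1 = "bool \<Rightarrow> bool \<Rightarrow> complex"

definition hadamard :: gate1 where
  "hadamard y x = sgnb (y \<and> x) / of_real (sqrt 2)"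

definition Omega :: "nat \<Rightarrow> gate1" where
  "Omega m y x = (if x then zeta m else 1) * sgnb (y \<and> x) / of_real (sqrt 2)"

definition Sgate :: "nat \<Rightarrow> gate1" where
  "Sgate m y x = (if y = x then (if x then zeta m else 1) else 0)"

text \<open>n-qubit register states: amplitudes indexed by bit strings of length n.\<close>
type_synonym reg = "bool list \<Rightarrow> complex"

definition tensor_pow :: "nat \<Rightarrow> gate1 \<Rightarrow> reg \<Rightarrow> reg" where
  "tensor_pow n M \<psi> = (\<lambda>y. \<Sum>x\<in>bitstrings n. (\<Prod>i<n. M (y ! i) (x ! i)) * \<psi> x)"

definition phase_oracle :: "(bool list \<Rightarrow> bool) \<Rightarrow> reg \<Rightarrow> reg" where
  "phase_oracle f \<psi> = (\<lambda>x. sgnb (f x) * \<psi> x)"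

definition ket0 :: "nat \<Rightarrow> reg" where
  "ket0 n = (\<lambda>x. if x = replicate n False then 1 else 0)"

text \<open>Joint states of driving qubit (bool) and register.\<close>
type_synonym jstate = "bool \<Rightarrow> reg"

definition apply_reg :: "(reg \<Rightarrow> reg) \<Rightarrow> jstate \<Rightarrow> jstate" where
  "apply_reg U \<Psi> = (\<lambda>c. U (\<Psi> c))"

definition controlled :: "bool \<Rightarrow> (reg \<Rightarrow> reg) \<Rightarrow> jstate \<Rightarrow> jstate" where
  "controlled b U \<Psi> = (\<lambda>c. if c = b then U (\<Psi> c) else \<Psi> c)"

definition apply_drive :: "gate1 \<Rightarrow> jstate \<Rightarrow> jstate" where
  "apply_drive M \<Psi> = (\<lambda>c x. M c False * \<Psi> False x + M c True * \<Psi> True x)"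

text \<open>Initial state |+> (x) |0^n>\<close>
definition init_state :: "nat \<Rightarrow> jstate" where
  "init_state n = (\<lambda>c. (\<lambda>x. ket0 n x / of_real (sqrt 2)))"

text \<open>Final state of algorithm A^{(m)2,3}_n(f1,f2,f3) before measurement.\<close>
definition alg_final :: "nat \<Rightarrow> nat \<Rightarrow> (bool list \<Rightarrow> bool) \<Rightarrow> (bool list \<Rightarrow> bool)
    \<Rightarrow> (bool list \<Rightarrow> bool) \<Rightarrow> jstate" where
  "alg_final n m f1 f2 f3 =
     (let s1 = apply_reg (tensor_pow n hadamard) (init_state n);
          s2 = controlled False
                 (tensor_pow n hadamard \<circ> phase_oracle f1 \<circ> tensor_pow n (Omega m) \<circ> phase_oracle f2) s1;
          s3 = controlled True (phase_oracle f3 \<circ> tensor_pow n (Sgate m)) s2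
      in apply_drive hadamard s3)"

definition prob_drive_one :: "nat \<Rightarrow> nat \<Rightarrow> (bool list \<Rightarrow> bool) \<Rightarrow> (bool list \<Rightarrow> bool)
    \<Rightarrow> (bool list \<Rightarrow> bool) \<Rightarrow> real" where
  "prob_drive_one n m f1 f2 f3 = (\<Sum>x\<in>bitstrings n. (cmod (alg_final n m f1 f2 f3 True x))\<^sup>2)"

end

theory Submission
  imports Defs
begin



lemma bitstrings_0: "bitstrings 0 = {[]}" by (auto simp: bitstrings_def)

lemma bitstrings_Suc: "bitstrings (Suc n) = (\<lambda>(b,xs). b # xs) ` (UNIV \<times> bitstrings n)"
  by (auto simp: bitstrings_def image_iff length_Suc_conv)

lemma finite_bitstrings: "finite (bitstrings n)"
  by (induction n) (auto simp: bitstrings_0 bitstrings_Suc)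

lemma sum_prod_bits:
  fixes F :: "nat \<Rightarrow> bool \<Rightarrow> 'a::comm_semiring_1"
  shows "(\<Sum>x\<in>bitstrings n. \<Prod>i<n. F i (x!i)) = (\<Prod>i<n. F i False + F i True)"
proof (induction n arbitrary: F)
  case 0
  then show ?case by (simp add: bitstrings_0)
next
  case (Suc n)
  have "(\<Sum>x\<in>bitstrings (Suc n). \<Prod>i<Suc n. F i (x!i))
      = (\<Sum>(b,xs)\<in>UNIV \<times> bitstrings n. \<Prod>i<Suc n. F i ((b#xs)!i))"
    by (subst bitstrings_Suc, subst sum.reindex) (auto simp: inj_on_def case_prod_beta)
  also have "\<dots> = (\<Sum>(b,xs)\<in>UNIV \<times> bitstrings n. F 0 b * (\<Prod>i<n. F (Suc i) (xs!i)))"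
    by (simp add: prod.lessThan_Suc_shift del: prod.lessThan_Suc)
  also have "\<dots> = (\<Sum>b\<in>UNIV. F 0 b * (\<Sum>xs\<in>bitstrings n. \<Prod>i<n. F (Suc i) (xs!i)))"
    by (simp add: sum.cartesian_product[symmetric] sum_distrib_left)
  also have "\<dots> = (F 0 False + F 0 True) * (\<Prod>i<n. F (Suc i) False + F (Suc i) True)"
    using Suc.IH[of "\<lambda>i. F (Suc i)"] by (simp add: UNIV_bool algebra_simps)
  also have "\<dots> = (\<Prod>i<Suc n. F i False + F i True)"
    by (simp add: prod.lessThan_Suc_shift del: prod.lessThan_Suc)
  finally show ?case .
qed




definition hk :: "nat \<Rightarrow> bool list \<Rightarrow> bool list \<Rightarrow> complex" where
  "hk n y x = (\<Prod>i<n. sgnb (y!i \<and> x!i))"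

definition Zf :: "nat \<Rightarrow> nat \<Rightarrow> bool list \<Rightarrow> complex" where
  "Zf n m x = (\<Prod>i<n. if x!i then zeta m else 1)"

lemma hk_sym: "hk n y x = hk n x y"
  by (simp add: hk_def conj_commute)

lemma cnj_sgnb[simp]: "cnj (sgnb b) = sgnb b"
  by (simp add: sgnb_def)

lemma sgnb_sq[simp]: "sgnb b * sgnb b = 1"
  by (simp add: sgnb_def)

lemma norm_sq': "(complex_of_real (cmod z))^2 = z * cnj z"
  by (metis complex_norm_square of_real_power)

lemma cnj_hk[simp]: "cnj (hk n y x) = hk n y x"
  by (simp add: hk_def cnj_prod)

lemma orth:
  assumes "y \<in> bitstrings n" "y' \<in> bitstrings n"
  shows "(\<Sum>z\<in>bitstrings n. hk n z y * hk n z y') = (if y = y' then 2^n else 0)"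
proof -
  have "(\<Sum>z\<in>bitstrings n. hk n z y * hk n z y')
      = (\<Sum>z\<in>bitstrings n. \<Prod>i<n. sgnb (z!i \<and> y!i) * sgnb (z!i \<and> y'!i))"
    by (simp add: hk_def prod.distrib)
  also have "\<dots> = (\<Prod>i<n. 1 + sgnb (y!i) * sgnb (y'!i))"
    by (subst sum_prod_bits) (simp add: sgnb_def)
  also have "\<dots> = (if y = y' then 2^n else 0)"
  proof (cases "y = y'")
    case True
    then show ?thesis by simp
  next
    case False
    then obtain i where "i < n" "y!i \<noteq> y'!i"
      using assms nth_equalityI[of y y'] by (auto simp: bitstrings_def)
    then have "(1 + sgnb (y!i) * sgnb (y'!i)) = 0" by (auto simp: sgnb_def)
    have "(\<Prod>i<n. 1 + sgnb (y!i) * sgnb (y'!i)) = 0"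
      by (rule prod_zero) (use \<open>i < n\<close> \<open>1 + sgnb (y!i) * sgnb (y'!i) = 0\<close> in auto)
    then show ?thesis using False by simp
  qed
  finally show ?thesis .
qed




lemma inversion:
  assumes "z \<in> bitstrings n"
  shows "(\<Sum>y\<in>bitstrings n. hk n z y * (\<Sum>x\<in>bitstrings n. hk n y x * P x)) = 2^n * P z"
proof -
  let ?B = "bitstrings n"
  have "(\<Sum>y\<in>?B. hk n z y * (\<Sum>x\<in>?B. hk n y x * P x))
      = (\<Sum>x\<in>?B. P x * (\<Sum>y\<in>?B. hk n y z * hk n y x))"
    apply (simp add: sum_distrib_left)
    apply (subst sum.swap) apply (simp add: hk_sym[of n z] mult_ac)
    done
  also have "\<dots> = (\<Sum>x\<in>?B. if z = x then P x * 2^n else 0)"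
    by (intro sum.cong refl) (simp add: orth assms)
  also have "\<dots> = 2^n * P z" using assms by (simp add: finite_bitstrings)
  finally show ?thesis .
qed

lemma wt_Zf: "length x = n \<Longrightarrow> zeta m ^ wt x = Zf n m x"
proof (induction x arbitrary: n)
  case Nil
  then show ?case by (simp add: wt_def Zf_def)
next
  case (Cons a x)
  then obtain k where k: "n = Suc k" "length x = k" by auto
  have "Zf n m (a # x) = (if a then zeta m else 1) * Zf k m x"
    unfolding k Zf_def by (simp add: prod.lessThan_Suc_shift del: prod.lessThan_Suc)
  moreover have "wt (a # x) = (if a then 1 else 0) + wt x" by (simp add: wt_def)
  ultimately show ?case using Cons.IH[OF k(2)] by (simp add: power_add)
qed

lemma dotp_hk:
  assumes "length x = n" "length w = n"
  shows "sgnb (dotp x w) = hk n x w"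
proof -
  have set: "{i. i < length x \<and> i < length w \<and> x ! i \<and> w ! i} = {..<n} \<inter> {i. x!i \<and> w!i}"
    using assms by auto
  have "hk n x w = (\<Prod>i<n. if x!i \<and> w!i then -1 else 1)"
    by (simp add: hk_def sgnb_def)
  also have "\<dots> = (-1) ^ card ({..<n} \<inter> {i. x!i \<and> w!i})"
    by (subst prod.If_cases) auto
  finally show ?thesis
    unfolding dotp_def set sgnb_def
    by (auto simp: neg_one_even_power neg_one_odd_power)
qed



lemma parseval:
  "(\<Sum>z\<in>bitstrings n. (cmod (\<Sum>y\<in>bitstrings n. hk n z y * D y))^2)
     = 2^n * (\<Sum>y\<in>bitstrings n. (cmod (D y))^2)"
proof -
  let ?B = "bitstrings n"
  have "complex_of_real (\<Sum>z\<in>?B. (cmod (\<Sum>y\<in>?B. hk n z y * D y))^2)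
     = (\<Sum>z\<in>?B. (\<Sum>y\<in>?B. hk n z y * D y) * (\<Sum>y'\<in>?B. hk n z y' * cnj (D y')))"
    by (simp add: norm_sq' cnj_sum)
  also have "\<dots> = (\<Sum>z\<in>?B. \<Sum>y\<in>?B. \<Sum>y'\<in>?B. D y * cnj (D y') * (hk n z y * hk n z y'))"
    by (simp add: sum_product mult_ac)
  also have "\<dots> = (\<Sum>y\<in>?B. \<Sum>z\<in>?B. \<Sum>y'\<in>?B. D y * cnj (D y') * (hk n z y * hk n z y'))"
    by (rule sum.swap)
  also have "\<dots> = (\<Sum>y\<in>?B. \<Sum>y'\<in>?B. \<Sum>z\<in>?B. D y * cnj (D y') * (hk n z y * hk n z y'))"
    by (rule sum.cong[OF refl], rule sum.swap)
  also have "\<dots> = (\<Sum>y\<in>?B. \<Sum>y'\<in>?B. D y * cnj (D y') * (\<Sum>z\<in>?B. hk n z y * hk n z y'))"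
    by (simp add: sum_distrib_left)
  also have "\<dots> = (\<Sum>y\<in>?B. \<Sum>y'\<in>?B. if y = y' then D y * cnj (D y') * 2^n else 0)"
    by (intro sum.cong refl) (simp add: orth)
  also have "\<dots> = (\<Sum>y\<in>?B. D y * cnj (D y) * 2^n)"
    by (simp add: finite_bitstrings)
  also have "\<dots> = complex_of_real (2^n * (\<Sum>y\<in>?B. (cmod (D y))^2))"
    by (simp add: norm_sq' sum_distrib_left mult_ac)
  finally show ?thesis using of_real_eq_iff by blast
qed





abbreviation sq2 :: complex where "sq2 \<equiv> complex_of_real (sqrt 2)"

lemma sq2_sq: "sq2^2 = 2"
  by (metis of_real_numeral of_real_power real_sqrt_pow2 zero_le_numeral)

lemma sq2_nz: "sq2 \<noteq> 0" by simp

lemma sq2_pow2n: "sq2^(2*n) = 2^n"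
  by (simp add: power_mult sq2_sq)

lemma sqnn: "sq2^n * sq2^n = 2^n"
  by (metis mult_2 power_add sq2_pow2n)

lemma prodH: "(\<Prod>i<n. hadamard (z!i) (x!i)) = hk n z x / sq2^n"
  by (simp add: hadamard_def hk_def prod_dividef)

lemma prodO: "(\<Prod>i<n. Omega m (y!i) (x!i)) = hk n y x * Zf n m x / sq2^n"
  by (simp add: Omega_def hk_def Zf_def prod_dividef prod.distrib mult_ac)

lemma tp_H: "tensor_pow n hadamard \<psi> z = (\<Sum>x\<in>bitstrings n. hk n z x * \<psi> x) / sq2^n"
  by (simp add: tensor_pow_def prodH sum_divide_distrib)

lemma tp_O: "tensor_pow n (Omega m) \<psi> y = (\<Sum>x\<in>bitstrings n. hk n y x * Zf n m x * \<psi> x) / sq2^n"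
  by (simp add: tensor_pow_def prodO sum_divide_distrib)

lemma tp_S: "tensor_pow n (Sgate m) (\<lambda>x. c) y = c * Zf n m y"
proof -
  have "tensor_pow n (Sgate m) (\<lambda>x. c) y = c * (\<Sum>x\<in>bitstrings n. \<Prod>i<n. Sgate m (y!i) (x!i))"
    by (simp add: tensor_pow_def sum_distrib_left mult_ac)
  also have "\<dots> = c * Zf n m y"
  proof -
    have "\<And>i. Sgate m (y!i) False + Sgate m (y!i) True = (if y!i then zeta m else 1)"
      by (simp add: Sgate_def)
    then show ?thesis by (subst sum_prod_bits) (simp add: Zf_def)
  qed
  finally show ?thesis .
qed

lemma s1_eq: "apply_reg (tensor_pow n hadamard) (init_state n) = (\<lambda>c y. 1 / sq2^(Suc n))"
proof (intro ext)
  fix c y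
  let ?r = "replicate n False"
  have r: "?r \<in> bitstrings n" by (simp add: bitstrings_def)
  have "apply_reg (tensor_pow n hadamard) (init_state n) c y
     = (\<Sum>x\<in>bitstrings n. if x = ?r then hk n y x / sq2 else 0) / sq2^n"
    unfolding apply_reg_def init_state_def tp_H ket0_def
    by (intro arg_cong[where f="\<lambda>t. t / sq2^n"] sum.cong refl) auto
  also have "\<dots> = hk n y ?r / sq2 / sq2^n" using r by (simp add: finite_bitstrings)
  also have "hk n y ?r = 1" by (simp add: hk_def sgnb_def)
  finally show "apply_reg (tensor_pow n hadamard) (init_state n) c y = 1 / sq2^(Suc n)"
    by simp
qed

lemma final_eq:
  assumes z: "z \<in> bitstrings n"
  shows "alg_final n m g f f True z =
     (\<Sum>y\<in>bitstrings n. hk n z y * ((sgnb (g y) - 1) * (\<Sum>x\<in>bitstrings n. hk n y x * (sgnb (f x) * Zf n m x)))) / sq2^(3*n+2)"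
proof -
  define Hf where "Hf = (\<lambda>y. \<Sum>x\<in>bitstrings n. hk n y x * (sgnb (f x) * Zf n m x))"
  define c where "c = 1 / sq2^(Suc n)"
  define A where "A = (\<Sum>y\<in>bitstrings n. hk n z y * (sgnb (g y) * ((\<Sum>x\<in>bitstrings n. hk n y x * Zf n m x * (sgnb (f x) * c)) / sq2^n))) / sq2^n"
  define B where "B = sgnb (f z) * (c * Zf n m z)"
  have e: "alg_final n m g f f True z = (1/sq2) * A - (1/sq2) * B"
    unfolding A_def B_def c_def
    by (simp add: alg_final_def Let_def s1_eq apply_drive_def controlled_def tp_H tp_O tp_S
        phase_oracle_def hadamard_def sgnb_def mult_ac)
  have inner: "\<And>y. (\<Sum>x\<in>bitstrings n. hk n y x * Zf n m x * (sgnb (f x) * c)) = c * Hf y"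
    unfolding Hf_def by (simp add: sum_distrib_left mult_ac)
  have A2: "A = c / (sq2^n * sq2^n) * (\<Sum>y\<in>bitstrings n. hk n z y * (sgnb (g y) * Hf y))"
    unfolding A_def inner by (simp add: sum_distrib_left sum_divide_distrib mult_ac)
  have inv: "(\<Sum>y\<in>bitstrings n. hk n z y * Hf y) = 2^n * (sgnb (f z) * Zf n m z)"
    unfolding Hf_def by (rule inversion[OF z])
  have B2: "B = c / (sq2^n * sq2^n) * (\<Sum>y\<in>bitstrings n. hk n z y * Hf y)"
    unfolding B_def inv sqnn by simp
  have "alg_final n m g f f True z = (1/sq2) * (c / (sq2^n * sq2^n)) *
      ((\<Sum>y\<in>bitstrings n. hk n z y * (sgnb (g y) * Hf y)) - (\<Sum>y\<in>bitstrings n. hk n z y * Hf y))"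
    unfolding e A2 B2 by (simp add: algebra_simps)
  also have "\<dots> = (1/sq2) * (c / (sq2^n * sq2^n)) * (\<Sum>y\<in>bitstrings n. hk n z y * ((sgnb (g y) - 1) * Hf y))"
    by (simp add: sum_subtractf[symmetric] algebra_simps)
  also have "(1/sq2) * (c / (sq2^n * sq2^n)) = 1 / sq2^(3*n+2)"
  proof -
    have p3: "sq2^(n*3) = sq2^n * (sq2^n * sq2^n)" by (simp add: power_mult power3_eq_cube)
    show ?thesis unfolding c_def by (simp add: power_add field_simps p3)
  qed
  finally show ?thesis unfolding Hf_def by simp
qed




lemma sgnb_neq: "sgnb (a \<noteq> b) = sgnb a * sgnb b"
  by (simp add: sgnb_def)

lemma cmod_div_sq2: "(cmod (X / sq2^k))^2 = (cmod X)^2 / 2^k"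
proof -
  have e: "(sqrt 2 ^ k)^2 = (2::real)^k"
    by (metis power_mult mult.commute real_sqrt_pow2 zero_le_numeral)
  have "cmod (X / sq2^k) = cmod X / sqrt 2 ^ k" by (simp add: norm_divide norm_power)
  then show ?thesis by (simp add: power_divide e)
qed

theorem proposition1:
  fixes n m :: nat and f g :: "bool list \<Rightarrow> bool" and S :: "bool list set"
  assumes "S \<subseteq> bitstrings n"
    and "\<And>x. x \<in> bitstrings n \<Longrightarrow> (g x \<longleftrightarrow> x \<in> S)"
  shows "prob_drive_one n m g f f = (1 / 2 ^ n) * (\<Sum>x\<in>S. (cmod (mHadamard n m f x))\<^sup>2)"
proof -
  let ?B = "bitstrings n"
  define Hf where "Hf = (\<lambda>y. \<Sum>x\<in>?B. hk n y x * (sgnb (f x) * Zf n m x))"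
  define D where "D = (\<lambda>y. (sgnb (g y) - 1) * Hf y)"
  define T where "T = (\<Sum>y\<in>S. (cmod (Hf y))^2)"
  have "prob_drive_one n m g f f = (\<Sum>z\<in>?B. (cmod ((\<Sum>y\<in>?B. hk n z y * D y) / sq2^(3*n+2)))^2)"
    unfolding prob_drive_one_def D_def Hf_def by (intro sum.cong refl) (simp add: final_eq)
  also have "\<dots> = (\<Sum>z\<in>?B. (cmod (\<Sum>y\<in>?B. hk n z y * D y))^2) / 2^(3*n+2)"
    unfolding cmod_div_sq2 by (rule sum_divide_distrib[symmetric])
  also have "\<dots> = 2^n * (\<Sum>y\<in>?B. (cmod (D y))^2) / 2^(3*n+2)"
    by (simp add: parseval)
  also have "(\<Sum>y\<in>?B. (cmod (D y))^2) = (\<Sum>y\<in>?B. if y \<in> S then 4 * (cmod (Hf y))^2 else 0)"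
  proof (intro sum.cong refl)
    fix y assume "y \<in> ?B"
    then show "(cmod (D y))^2 = (if y \<in> S then 4 * (cmod (Hf y))^2 else 0)"
      using assms(2)[of y] by (auto simp: D_def sgnb_def norm_mult power_mult_distrib)
  qed
  also have "\<dots> = 4 * T"
    unfolding T_def using assms(1)
    by (simp add: sum.If_cases finite_bitstrings sum_distrib_left Int_absorb1)
  finally have L: "prob_drive_one n m g f f = 2^n * (4 * T) / 2^(3*n+2)" .
  have mH: "\<And>y. y \<in> ?B \<Longrightarrow> mHadamard n m f y = Hf y / complex_of_real (sqrt (2^n))"
  proof -
    fix y assume y: "y \<in> ?B"
    have "(\<Sum>x\<in>?B. sgnb (f x \<noteq> dotp x y) * zeta m ^ wt x) = Hf y"
      unfolding Hf_def
    proof (intro sum.cong refl)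
      fix x assume x: "x \<in> ?B"
      show "sgnb (f x \<noteq> dotp x y) * zeta m ^ wt x = hk n y x * (sgnb (f x) * Zf n m x)"
      proof -
        have lx: "length x = n" and ly: "length y = n" using x y by (auto simp: bitstrings_def)
        have "sgnb (f x \<noteq> dotp x y) = sgnb (f x) * sgnb (dotp x y)" by (rule sgnb_neq)
        also have "sgnb (dotp x y) = hk n y x" using dotp_hk[OF lx ly] hk_sym[of n x y] by simp
        finally show ?thesis using wt_Zf[OF lx, of m] by (simp add: mult_ac)
      qed
    qed
    then show "mHadamard n m f y = Hf y / complex_of_real (sqrt (2^n))"
      by (simp add: mHadamard_def)
  qed
  have "(\<Sum>x\<in>S. (cmod (mHadamard n m f x))\<^sup>2) = (\<Sum>x\<in>S. (cmod (Hf x))^2 / 2^n)"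
    using assms(1) by (intro sum.cong refl) (auto simp: mH norm_divide power_divide)
  also have "\<dots> = T / 2^n" unfolding T_def by (simp add: sum_divide_distrib)
  finally have R: "(\<Sum>x\<in>S. (cmod (mHadamard n m f x))\<^sup>2) = T / 2^n" .
  have p3: "(2::real)^(n*3) = 2^n * (2^n * 2^n)" by (simp add: power_mult power3_eq_cube)
  show ?thesis unfolding L R by (simp add: power_add field_simps p3)
qed


end
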